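(* If $C$ is a smooth cone in a finite-dimensional Euclidean space $X$, then its polar cone $C^\circ$ is also smooth.
   Context: A cone $C$ is regular if it is pointed, closed, convex, with nonempty interior. A ray is $\{\lambda x:\lambda\ge0\}$, $x\ne0$; an extreme ray of $C$ is a ray in $C$ which is a face of $C$ (a convex $\mathcal F\subset C$ such that $x,y\in C$, $\lambda x+(1-\lambda)y\in\mathcal F$ for some $0<\lambda<1$ implies $x,y\in\mathcal F$). A regular cone $C$ is smooth if every boundary point of $C$ lies on an extreme ray of $C$ and, for every non-zero point $x$ of any extreme ray, the normal cone $N_C(x)$ has dimension one. $C^\circ=\{y:\langle x,y\rangle\le0\ \forall x\in C\}$. *)

theory Defs
  imports "HOL-Analysis.Analysis"
begin

definition pointed_cone :: "'a::real_vector set \<Rightarrow> bool" where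
  "pointed_cone C \<longleftrightarrow> C \<inter> uminus ` C = {0}"

definition regular_cone :: "'a::euclidean_space set \<Rightarrow> bool" where
  "regular_cone C \<longleftrightarrow> cone C \<and> pointed_cone C \<and> closed C \<and> convex C \<and> interior C \<noteq> {}"

definition is_face :: "'a::real_vector set \<Rightarrow> 'a set \<Rightarrow> bool" where
  "is_face F C \<longleftrightarrow> convex F \<and> F \<subseteq> C \<and>
     (\<forall>x\<in>C. \<forall>y\<in>C. \<forall>l::real. 0 < l \<and> l < 1 \<and> l *\<^sub>R x + (1 - l) *\<^sub>R y \<in> F \<longrightarrow> x \<in> F \<and> y \<in> F)"

definition ray :: "'a::real_vector \<Rightarrow> 'a set" where
  "ray x = {l *\<^sub>R x | l::real. 0 \<le> l}"

definition extreme_ray :: "'a::real_vector set \<Rightarrow> 'a set \<Rightarrow> bool" where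
  "extreme_ray C R \<longleftrightarrow> (\<exists>x. x \<noteq> 0 \<and> R = ray x) \<and> R \<subseteq> C \<and> is_face R C"

definition normal_cone :: "'a::real_inner set \<Rightarrow> 'a \<Rightarrow> 'a set" where
  "normal_cone C x = {y. \<forall>z\<in>C. inner y (z - x) \<le> 0}"

definition smooth_cone :: "'a::euclidean_space set \<Rightarrow> bool" where
  "smooth_cone C \<longleftrightarrow> regular_cone C \<and>
     (\<forall>x\<in>frontier C. \<exists>R. extreme_ray C R \<and> x \<in> R) \<and>
     (\<forall>R x. extreme_ray C R \<and> x \<in> R \<and> x \<noteq> 0 \<longrightarrow> aff_dim (normal_cone C x) = 1)"

definition polar_cone :: "'a::real_inner set \<Rightarrow> 'a set" where
  "polar_cone C = {y. \<forall>x\<in>C. inner x y \<le> 0}"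

end

theory Submission
  imports Defs
begin

lemma interior_normal_zero:
  fixes S :: "'a::euclidean_space set"
  assumes "c \<in> interior S" "\<forall>w\<in>S. inner y (w - c) \<le> 0" shows "y = 0"
proof (rule ccontr)
  assume y: "y \<noteq> 0"
  obtain e where e: "e>0" "ball c e \<subseteq> S" using assms(1) mem_interior by blast
  define t where "t = e / (2 * norm y)"
  have t: "t > 0" using e y by (simp add: t_def)
  have "dist c (c + t *\<^sub>R y) = e/2" using e y by (simp add: dist_norm t_def)
  hence "c + t *\<^sub>R y \<in> S" using e by auto
  hence "inner y (c + t *\<^sub>R y - c) \<le> 0" using assms(2) by auto
  hence "t * (y \<bullet> y) \<le> 0" by simp
  moreover have "y \<bullet> y > 0" using y by simp
  ultimately show False using t by (simp add: mult_le_0_iff)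
qed

lemma normal_cone_cone:
  assumes "cone S" "x \<in> S"
  shows "y \<in> normal_cone S x \<longleftrightarrow> y \<in> polar_cone S \<and> inner x y = 0"
proof
  assume y: "y \<in> normal_cone S x"
  have "0 \<in> S" "2 *\<^sub>R x \<in> S" using assms unfolding cone_def
    by (metis scaleR_zero_left order_refl, simp)
  then have "inner y (0 - x) \<le> 0" "inner y (2 *\<^sub>R x - x) \<le> 0" using y unfolding normal_cone_def by auto
  hence xy: "inner x y = 0" by (simp add: inner_commute algebra_simps)
  have "inner z y \<le> 0" if "z \<in> S" for z
    using y that xy unfolding normal_cone_def by (auto simp: inner_commute inner_diff_right)
  with xy show "y \<in> polar_cone S \<and> inner x y = 0" by (auto simp: polar_cone_def)
next
  assume "y \<in> polar_cone S \<and> inner x y = 0"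
  then show "y \<in> normal_cone S x"
    by (auto simp: polar_cone_def normal_cone_def inner_commute inner_diff_right)
qed

lemma bipolar:
  fixes S :: "'a::euclidean_space set"
  assumes "cone S" "closed S" "convex S" "S \<noteq> {}"
  shows "polar_cone (polar_cone S) = S"
proof
  show "S \<subseteq> polar_cone (polar_cone S)" by (auto simp: polar_cone_def inner_commute)
  show "polar_cone (polar_cone S) \<subseteq> S"
  proof
    fix z assume z: "z \<in> polar_cone (polar_cone S)"
    show "z \<in> S"
    proof (rule ccontr)
      assume zS: "z \<notin> S"
      obtain a b where ab: "inner a z < b" "\<forall>x\<in>S. inner a x > b"
        using separating_hyperplane_closed_point[OF assms(3) assms(2) zS] by blast
      obtain x0 where "x0 \<in> S" using assms(4) by blast
      hence "(0::real) *\<^sub>R x0 \<in> S" using assms(1) unfolding cone_def by blast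
      hence "0 \<in> S" by simp
      hence b: "b < 0" using ab by force
      have ge: "inner a x \<ge> 0" if "x \<in> S" for x
      proof (rule ccontr)
        assume "\<not> inner a x \<ge> 0"
        hence n: "inner a x < 0" by simp
        define c where "c = b / inner a x"
        have "c \<ge> 0" using n b by (simp add: c_def divide_nonpos_neg)
        hence "c *\<^sub>R x \<in> S" using assms(1) that unfolding cone_def by blast
        hence "inner a (c *\<^sub>R x) > b" using ab by blast
        moreover have "inner a (c *\<^sub>R x) = b" using n by (simp add: c_def)
        ultimately show False by simp
      qed
      have "-a \<in> polar_cone S" using ge by (auto simp: polar_cone_def inner_commute)
      hence "inner (-a) z \<le> 0" using z unfolding polar_cone_def by blast
      hence "inner a z \<ge> 0" by simp
      with ab b show False by linarith
    qed
  qed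
qed

lemma aff_dim1_line:
  fixes N :: "'a::euclidean_space set"
  assumes "aff_dim N = 1" "0 \<in> N" "y \<in> N" "y \<noteq> 0" "w \<in> N"
  shows "\<exists>t. w = t *\<^sub>R y"
proof -
  have "0 \<in> affine hull N" using assms(2) by (rule hull_inc)
  then have e: "aff_dim N = int (dim ((+) (- 0) ` N))" by (rule aff_dim_eq_dim)
  have "(+) (- 0) ` N = N" by simp
  with e assms(1) have d: "dim N = 1" by simp
  show ?thesis
  proof (rule ccontr)
    assume nt: "\<nexists>t. w = t *\<^sub>R y"
    hence "w \<notin> span {y}" unfolding span_singleton by blast
    moreover have "y \<notin> span {}" using assms(4) by (simp add: span_empty)
    hence "independent {y}" using independent_insertI[of y "{}"] independent_empty by blast
    ultimately have ind: "independent {w, y}" by (rule independent_insertI)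
    have sub: "{w, y} \<subseteq> N" using assms(3,5) by blast
    have c: "card {w,y} \<le> dim N" using independent_card_le_dim[OF sub ind] .
    have "w \<noteq> y"
    proof
      assume "w = y" then have "w = 1 *\<^sub>R y" by simp
      with nt show False by blast
    qed
    hence "card {w,y} = 2" by simp
    with c d show False by simp
  qed
qed

lemma ray_facts:
  fixes x :: "'a::euclidean_space"
  shows "0 \<in> ray x" "x \<in> ray x"
    and "cone S \<Longrightarrow> x \<in> S \<Longrightarrow> ray x \<subseteq> S"
    and "convex (ray x)"
    and "x \<noteq> 0 \<Longrightarrow> aff_dim (ray x) = 1"
proof -
  show "0 \<in> ray x" unfolding ray_def by (rule CollectI, rule exI[of _ "0::real"], simp)
  show "x \<in> ray x" unfolding ray_def by (rule CollectI, rule exI[of _ "1::real"], simp)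
  show "cone S \<Longrightarrow> x \<in> S \<Longrightarrow> ray x \<subseteq> S" unfolding ray_def cone_def by blast
  show "convex (ray x)"
  proof (rule convexI)
    fix p q :: 'a and u v :: real
    assume h: "p \<in> ray x" "q \<in> ray x" "0 \<le> u" "0 \<le> v" "u + v = 1"
    then obtain a b where ab: "p = a *\<^sub>R x" "q = b *\<^sub>R x" "0 \<le> a" "0 \<le> b" unfolding ray_def by blast
    have "u *\<^sub>R p + v *\<^sub>R q = (u * a + v * b) *\<^sub>R x" using ab by (simp add: scaleR_add_left)
    moreover have "0 \<le> u * a + v * b" using h ab by simp
    ultimately show "u *\<^sub>R p + v *\<^sub>R q \<in> ray x" unfolding ray_def by blast
  qed
  assume x: "x \<noteq> 0"
  have "0 \<in> affine hull (ray x)" using \<open>0 \<in> ray x\<close> by (rule hull_inc)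
  then have "aff_dim (ray x) = int (dim ((+) (- 0) ` ray x))" by (rule aff_dim_eq_dim)
  hence a: "aff_dim (ray x) = int (dim (ray x))" by simp
  have "dim {x} \<le> dim (ray x)" by (intro dim_subset) (simp add: \<open>x \<in> ray x\<close>)
  moreover have "ray x \<subseteq> span {x}" unfolding ray_def span_singleton by blast
  hence "dim (ray x) \<le> dim (span {x})" by (rule dim_subset)
  ultimately show "aff_dim (ray x) = 1" using a x by simp
qed


theorem corollary1:
  fixes C :: "'a::euclidean_space set"
  assumes "smooth_cone C"
  shows "smooth_cone (polar_cone C)"
proof -
  define K where "K = polar_cone C"
  have coneC: "cone C" and pC: "pointed_cone C" and clC: "closed C" and cvC: "convex C"
    and intC: "interior C \<noteq> {}"
    using assms unfolding smooth_cone_def regular_cone_def by auto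
  have fr: "\<And>x. x \<in> frontier C \<Longrightarrow> \<exists>R. extreme_ray C R \<and> x \<in> R"
    using assms unfolding smooth_cone_def by blast
  have nd: "\<And>R x. extreme_ray C R \<Longrightarrow> x \<in> R \<Longrightarrow> x \<noteq> 0 \<Longrightarrow> aff_dim (normal_cone C x) = 1"
    using assms unfolding smooth_cone_def by blast
  have Cne: "C \<noteq> {}" using intC interior_subset by blast
  have ptC: "x = 0" if "x \<in> C" "-x \<in> C" for x
  proof -
    have "-x \<in> uminus ` C" using that(1) by blast
    hence "-x \<in> C \<inter> uminus ` C" using that(2) by blast
    hence "-x = 0" using pC unfolding pointed_cone_def by blast
    thus ?thesis by simp
  qed
  have KK: "polar_cone K = C" unfolding K_def by (rule bipolar[OF coneC clC cvC Cne])
  have coneK: "cone K" unfolding K_def polar_cone_def cone_def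
    by (auto simp: mult_nonneg_nonpos)
  have clK: "closed K"
  proof -
    have "K = (\<Inter>x\<in>C. {y. inner x y \<le> 0})" unfolding K_def polar_cone_def by blast
    thus ?thesis by (simp add: closed_INT closed_halfspace_le)
  qed
  have cvK: "convex K"
  proof -
    have "K = (\<Inter>x\<in>C. {y. inner x y \<le> 0})" unfolding K_def polar_cone_def by blast
    thus ?thesis by (simp add: convex_INT convex_halfspace_le)
  qed
  have K0: "0 \<in> K" unfolding K_def polar_cone_def by simp
  have inK: "inner x y \<le> 0" if "x \<in> C" "y \<in> K" for x y
    using that unfolding K_def polar_cone_def by blast
  obtain c where c: "c \<in> interior C" using intC by blast
  have ptK: "y = 0" if "y \<in> K" "-y \<in> K" for y
  proof -
    have "inner y c \<ge> 0" using inK[OF _ that(2)] c interior_subset by (force simp: inner_commute)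
    moreover have "inner y c \<le> 0" using inK[OF _ that(1)] c interior_subset by (force simp: inner_commute)
    ultimately have "\<forall>w\<in>C. inner y (w - c) \<le> 0"
      using inK[OF _ that(1)] by (auto simp: inner_diff_right inner_commute)
    thus ?thesis by (rule interior_normal_zero[OF c])
  qed
  have pointK: "pointed_cone K"
    unfolding pointed_cone_def
  proof
    show "K \<inter> uminus ` K \<subseteq> {0}"
    proof
      fix y assume "y \<in> K \<inter> uminus ` K"
      then obtain y' where "y \<in> K" "y' \<in> K" "y = - y'" by blast
      hence "y \<in> K" "-y \<in> K" by auto
      thus "y \<in> {0}" using ptK by blast
    qed
    show "{0} \<subseteq> K \<inter> uminus ` K" using K0 by force
  qed
  have intK: "interior K \<noteq> {}"
  proof
    assume "interior K = {}"
    then obtain a b where a: "a \<noteq> 0" "K \<subseteq> {x. a \<bullet> x = b}"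
      using empty_interior_subset_hyperplane[OF cvK] by metis
    have b: "b = 0" using a K0 by auto
    have "a \<in> polar_cone K" "-a \<in> polar_cone K"
      using a b unfolding polar_cone_def by (auto simp: inner_commute)
    hence "a \<in> C" "-a \<in> C" using KK by auto
    hence "a = 0" by (rule ptC)
    with a show False by simp
  qed
  have regK: "regular_cone K" unfolding regular_cone_def using coneK pointK clK cvK intK by blast
  have frontC: "x \<in> frontier C" if "x \<in> C" "y \<in> K" "y \<noteq> 0" "inner x y = 0" for x y
  proof -
    have yN: "y \<in> normal_cone C x" using normal_cone_cone[OF coneC that(1)] that unfolding K_def by blast
    have "x \<notin> interior C"
    proof
      assume xi: "x \<in> interior C"
      have "\<forall>w\<in>C. inner y (w - x) \<le> 0" using yN unfolding normal_cone_def by blast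
      hence "y = 0" by (rule interior_normal_zero[OF xi])
      with that show False by simp
    qed
    thus ?thesis using that(1) clC by (simp add: frontier_def)
  qed
  have NCsub: "w \<in> ray y" if H: "x \<in> C" "x \<noteq> 0" "y \<in> K" "y \<noteq> 0" "inner x y = 0"
      "w \<in> normal_cone C x" for x y w
  proof -
    obtain R where R: "extreme_ray C R" "x \<in> R" using fr frontC[OF H(1,3,4,5)] by blast
    have ad: "aff_dim (normal_cone C x) = 1" using nd[OF R H(2)] .
    have yN: "y \<in> normal_cone C x" using normal_cone_cone[OF coneC H(1)] H unfolding K_def by blast
    have zN: "0 \<in> normal_cone C x" unfolding normal_cone_def by simp
    obtain t where t: "w = t *\<^sub>R y" using aff_dim1_line[OF ad zN yN H(4,6)] by blast
    have wK: "w \<in> K" using normal_cone_cone[OF coneC H(1)] H(6) unfolding K_def by blast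
    have "t \<ge> 0"
    proof (rule ccontr)
      assume "\<not> t \<ge> 0"
      hence tn: "t < 0" by simp
      have "0 \<le> - 1 / t" using tn by (intro divide_nonpos_neg) auto
      hence "(- 1 / t) *\<^sub>R w \<in> K" using coneK wK unfolding cone_def by blast
      moreover have "(- 1 / t) *\<^sub>R w = - y" using tn t by simp
      ultimately have "-y \<in> K" by simp
      hence "y = 0" using ptK H(3) by blast
      with H(4) show False by simp
    qed
    thus ?thesis unfolding ray_def using t by blast
  qed
  have ExtRay: "extreme_ray K (ray y)" if H: "x \<in> C" "x \<noteq> 0" "y \<in> K" "y \<noteq> 0" "inner x y = 0" for x y
    unfolding extreme_ray_def
  proof (intro conjI)
    show "\<exists>x. x \<noteq> 0 \<and> ray y = ray x" using H(4) by blast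
    show sub: "ray y \<subseteq> K" using ray_facts(3)[OF coneK H(3)] .
    show "is_face (ray y) K" unfolding is_face_def
    proof (intro conjI ballI allI impI)
      show "convex (ray y)" by (rule ray_facts(4))
      show "ray y \<subseteq> K" by (rule sub)
      fix a b l assume ab: "a \<in> K" "b \<in> K" and h: "0 < l \<and> l < 1 \<and> l *\<^sub>R a + (1 - l) *\<^sub>R b \<in> ray y"
      then obtain s where s: "l *\<^sub>R a + (1 - l) *\<^sub>R b = s *\<^sub>R y" unfolding ray_def by blast
      have "inner x (l *\<^sub>R a + (1 - l) *\<^sub>R b) = 0" using s H(5) by simp
      hence e: "l * inner x a + (1 - l) * inner x b = 0" by (simp add: inner_add_right)
      have pa: "inner x a \<le> 0" "inner x b \<le> 0" using inK H(1) ab by auto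
      have "l * inner x a \<le> 0" "(1 - l) * inner x b \<le> 0"
        using pa h by (auto simp: mult_nonneg_nonpos)
      hence "l * inner x a = 0" "(1 - l) * inner x b = 0" using e by linarith+
      hence "inner x a = 0" "inner x b = 0" using h by auto
      hence "a \<in> normal_cone C x" "b \<in> normal_cone C x"
        using normal_cone_cone[OF coneC H(1)] ab unfolding K_def by auto
      thus "a \<in> ray y" "b \<in> ray y" using NCsub[OF H] by blast+
    qed
  qed
  have NKeq: "normal_cone K y = ray x" if H: "x \<in> C" "x \<noteq> 0" "y \<in> K" "y \<noteq> 0" "inner x y = 0" for x y
  proof
    have iff: "v \<in> normal_cone K y \<longleftrightarrow> v \<in> C \<and> inner y v = 0" for v
      using normal_cone_cone[OF coneK H(3)] KK by simp
    show "ray x \<subseteq> normal_cone K y"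
    proof
      fix v assume "v \<in> ray x"
      then obtain l where l: "v = l *\<^sub>R x" "0 \<le> l" unfolding ray_def by blast
      have "v \<in> C" using coneC H(1) l unfolding cone_def by blast
      moreover have "inner y v = 0" using l H(5) by (simp add: inner_commute)
      ultimately show "v \<in> normal_cone K y" using iff by blast
    qed
    show "normal_cone K y \<subseteq> ray x"
    proof
      fix v assume "v \<in> normal_cone K y"
      hence v: "v \<in> C" "inner y v = 0" using iff by auto
      show "v \<in> ray x"
      proof (cases "v = 0")
        case True thus ?thesis using ray_facts(1) by simp
      next
        case False
        define z where "z = x + v"
        have hx: "2 *\<^sub>R x \<in> C" "2 *\<^sub>R v \<in> C" using coneC H(1) v(1) unfolding cone_def by auto
        have zh: "z = (1/2) *\<^sub>R (2 *\<^sub>R x) + (1 - 1/2) *\<^sub>R (2 *\<^sub>R v)" unfolding z_def by simp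
        have zC: "z \<in> C" using convexD[OF cvC hx, of "1/2" "1 - 1/2"] zh by simp
        have z0: "z \<noteq> 0"
        proof
          assume "z = 0" hence "v = - x" unfolding z_def by (simp add: add_eq_0_iff)
          hence "-x \<in> C" using v by simp
          hence "x = 0" using ptC H(1) by blast
          with H(2) show False by simp
        qed
        have "inner z y = 0" unfolding z_def using v(2) H(5) by (simp add: inner_add_left inner_add_right inner_commute)
        hence "z \<in> frontier C" using frontC[OF zC H(3,4)] by blast
        then obtain R where R: "extreme_ray C R" "z \<in> R" using fr by blast
        then obtain z0 where Rz: "R = ray z0" "z0 \<noteq> 0" and face: "is_face R C" unfolding extreme_ray_def by blast
        have fc: "\<forall>a\<in>C. \<forall>b\<in>C. \<forall>l::real. 0 < l \<and> l < 1 \<and> l *\<^sub>R a + (1 - l) *\<^sub>R b \<in> R \<longrightarrow> a \<in> R \<and> b \<in> R"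
          using face unfolding is_face_def by blast
        have "0 < (1/2::real) \<and> (1/2::real) < 1 \<and> (1/2) *\<^sub>R (2 *\<^sub>R x) + (1 - 1/2) *\<^sub>R (2 *\<^sub>R v) \<in> R"
          using R(2) zh by simp
        hence "2 *\<^sub>R x \<in> R \<and> 2 *\<^sub>R v \<in> R" using fc hx by blast
        then obtain a b where ab: "2 *\<^sub>R x = a *\<^sub>R z0" "0 \<le> a" "2 *\<^sub>R v = b *\<^sub>R z0" "0 \<le> b"
          unfolding Rz ray_def by blast
        have "a \<noteq> 0" using ab H(2) by auto
        hence "v = (b / a) *\<^sub>R x"
        proof -
          assume a0: "a \<noteq> 0"
          have "(b / a) *\<^sub>R x = (1/2) *\<^sub>R ((b / a) *\<^sub>R (2 *\<^sub>R x))" by simp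
          also have "\<dots> = (1/2) *\<^sub>R (b *\<^sub>R z0)" using ab(1) a0 by simp
          also have "\<dots> = (1/2) *\<^sub>R (2 *\<^sub>R v)" using ab(3) by simp
          also have "\<dots> = v" by simp
          finally show ?thesis by simp
        qed
        moreover have "0 \<le> b / a" using ab by simp
        ultimately show ?thesis unfolding ray_def by blast
      qed
    qed
  qed
  obtain x1 y1 where xy1: "x1 \<in> C" "x1 \<noteq> 0" "y1 \<in> K" "y1 \<noteq> 0" "inner x1 y1 = 0"
  proof -
    obtain e :: 'a where e: "e \<in> Basis" by (meson ex_in_conv nonempty_Basis)
    hence "e \<noteq> 0" by auto
    hence "C \<noteq> UNIV" using ptC[of e] by auto
    then obtain x where "x \<in> frontier C" using frontier_not_empty[OF Cne] by blast
    then obtain R where R: "extreme_ray C R" "x \<in> R" using fr by blast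
    then obtain x0 where x0: "R = ray x0" "x0 \<noteq> 0" "R \<subseteq> C" unfolding extreme_ray_def by blast
    have x0R: "x0 \<in> R" using x0 ray_facts(2) by simp
    have ad: "aff_dim (normal_cone C x0) = 1" using nd[OF R(1) x0R x0(2)] .
    have "normal_cone C x0 \<noteq> {0}"
    proof
      assume "normal_cone C x0 = {0}"
      hence "aff_dim (normal_cone C x0) = 0" by simp
      with ad show False by simp
    qed
    moreover have "0 \<in> normal_cone C x0" unfolding normal_cone_def by simp
    ultimately obtain y where y: "y \<in> normal_cone C x0" "y \<noteq> 0" by blast
    have x0C: "x0 \<in> C" using x0R x0 by blast
    have "y \<in> K" "inner x0 y = 0" using normal_cone_cone[OF coneC x0C] y unfolding K_def by auto
    thus ?thesis using that x0C x0(2) y(2) by blast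
  qed
  have supp: "\<exists>x. x \<in> C \<and> x \<noteq> 0 \<and> inner x y = 0" if "y \<in> frontier K" for y
  proof -
    have yK: "y \<in> K" using that clK frontier_subset_closed by blast
    have ycl: "y \<in> closure K" using yK closure_subset by blast
    have "y \<notin> interior K" using that by (simp add: frontier_def)
    hence "y \<notin> rel_interior K" using rel_interior_nonempty_interior[OF intK] by simp
    then obtain a where a: "a \<noteq> 0" "\<And>w. w \<in> closure K \<Longrightarrow> a \<bullet> y \<le> a \<bullet> w"
      using supporting_hyperplane_relative_frontier[OF cvK ycl] by metis
    have "-a \<in> normal_cone K y"
      unfolding normal_cone_def using a(2) closure_subset by (force simp: inner_diff_right)
    hence "-a \<in> C" "inner y (-a) = 0" using normal_cone_cone[OF coneK yK] KK by auto
    thus ?thesis using a(1) by (intro exI[of _ "-a"]) (simp add: inner_commute)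
  qed
  have frK: "\<exists>R. extreme_ray K R \<and> y \<in> R" if H: "y \<in> frontier K" for y
  proof (cases "y = 0")
    case True
    thus ?thesis using ExtRay[OF xy1] ray_facts(1) by blast
  next
    case False
    obtain x where x: "x \<in> C" "x \<noteq> 0" "inner x y = 0" using supp[OF H] by blast
    have yK: "y \<in> K" using H clK frontier_subset_closed by blast
    show ?thesis using ExtRay[OF x(1,2) yK False x(3)] ray_facts(2) by blast
  qed
  have ndK: "aff_dim (normal_cone K y) = 1" if R: "extreme_ray K R" "y \<in> R" "y \<noteq> 0" for R y
  proof -
    obtain y0 where y0: "R = ray y0" "y0 \<noteq> 0" and RK: "R \<subseteq> K" and face: "is_face R K"
      using R(1) unfolding extreme_ray_def by blast
    have yK: "y \<in> K" using RK R(2) by blast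
    have "\<exists>x. x \<in> C \<and> x \<noteq> 0 \<and> inner x y = 0"
    proof (cases "y \<in> interior K")
      case False
      hence "y \<in> frontier K" using yK clK by (simp add: frontier_def)
      thus ?thesis by (rule supp)
    next
      case True
      obtain e where e: "e > 0" "ball y e \<subseteq> K" using True mem_interior by blast
      define d where "d = y - y1"
      define t where "t = e / (2 * (norm d + 1))"
      have dp: "0 < 2 * (norm d + 1)" by (smt (verit) norm_ge_zero)
      have t: "t > 0" unfolding t_def using divide_pos_pos[OF e(1) dp] .
      have "t * norm d < e"
      proof -
        have "t * norm d \<le> t * (norm d + 1)" using t by simp
        also have "\<dots> = e / 2" unfolding t_def using dp by (simp add: field_simps)
        finally show ?thesis using e by simp
      qed
      hence "dist y (y + t *\<^sub>R d) < e" using t by (simp add: dist_norm)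
      hence vK: "y + t *\<^sub>R d \<in> K" using e by auto
      define l where "l = 1 / (1 + t)"
      have l: "0 < l" "l < 1" using t by (auto simp: l_def)
      have "l *\<^sub>R (y + t *\<^sub>R d) + (1 - l) *\<^sub>R y1 = y"
      proof -
        have l1: "l * (1 + t) = 1" using t by (simp add: l_def)
        have l2: "1 - l = l * t" using l1 by (simp add: distrib_left)
        have "l *\<^sub>R (y + t *\<^sub>R d) + (1 - l) *\<^sub>R y1
              = (l * (1 + t)) *\<^sub>R y - (l * t) *\<^sub>R y1 + (l * t) *\<^sub>R y1"
          unfolding d_def l2 by (simp add: algebra_simps)
        also have "\<dots> = y" using l1 by simp
        finally show ?thesis .
      qed
      hence "y1 \<in> R" using face vK xy1(3) l R(2) unfolding is_face_def by metis
      then obtain s1 where s1: "y1 = s1 *\<^sub>R y0" "0 \<le> s1" unfolding y0 ray_def by blast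
      obtain s where s: "y = s *\<^sub>R y0" "0 \<le> s" using R(2) unfolding y0 ray_def by blast
      have "s1 \<noteq> 0" using s1 xy1(4) by auto
      hence "inner x1 y0 = 0" using xy1(5) s1 by simp
      hence "inner x1 y = 0" using s by simp
      thus ?thesis using xy1 by blast
    qed
    then obtain x where x: "x \<in> C" "x \<noteq> 0" "inner x y = 0" by blast
    have "normal_cone K y = ray x" by (rule NKeq[OF x(1,2) yK R(3) x(3)])
    thus ?thesis using ray_facts(5)[OF x(2)] by simp
  qed
  show ?thesis
    unfolding smooth_cone_def K_def[symmetric] using regK frK ndK by blast
qed

end
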